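(* Let $(A,\boxplus,0)$ be an L-mosaic. Then the relation defined by $y\le x$ if and only if $y\in x\boxplus x$ is a partial order on $A$, and $0$ is a bottom element for it.
   Context: For a multioperation $\boxplus:A\times A\to\wp(A)$ and subsets $X,Y$, $X\boxplus Y:=\bigcup_{x\in X,y\in Y}x\boxplus y$. A commutative mosaic $(A,\boxplus,e)$: $x\boxplus y=y\boxplus x$, $e\boxplus x=\{x\}$ for all $x$, and for some endofunction $\rho$, $z\in x\boxplus y$ implies $x\in z\boxplus\rho(y)$ and $y\in\rho(x)\boxplus z$. An L-mosaic is a commutative mosaic $(A,\boxplus,0)$ such that: (Lms1) $0,x\in x\boxplus x$; (Lms2) $(x\boxplus x)\boxplus(x\boxplus x)=x\boxplus x$; (Lms3) $(x\boxplus(x\boxplus y))\cap((x\boxplus y)\boxplus y)\subseteq x\boxplus y$; (Lms4) for all $x,y$ there is a unique $z\in x\boxplus y$ with $x,y\in z\boxplus z$. *)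

theory Defs
  imports Main
begin

definition set_mop :: "('a \<Rightarrow> 'a \<Rightarrow> 'a set) \<Rightarrow> 'a set \<Rightarrow> 'a set \<Rightarrow> 'a set" where
  "set_mop m X Y = (\<Union>x\<in>X. \<Union>y\<in>Y. m x y)"

text \<open>Commutative mosaic (A, m, e), with carrier A the whole type.\<close>
definition comm_mosaic :: "('a \<Rightarrow> 'a \<Rightarrow> 'a set) \<Rightarrow> 'a \<Rightarrow> bool" where
  "comm_mosaic m e \<longleftrightarrow>
     (\<forall>x y. m x y = m y x) \<and>
     (\<forall>x. m e x = {x}) \<and>
     (\<exists>\<rho>::'a \<Rightarrow> 'a. \<forall>x y z. z \<in> m x y \<longrightarrow> x \<in> m z (\<rho> y) \<and> y \<in> m (\<rho> x) z)"

definition L_mosaic :: "('a \<Rightarrow> 'a \<Rightarrow> 'a set) \<Rightarrow> 'a \<Rightarrow> bool" where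
  "L_mosaic m z0 \<longleftrightarrow>
     comm_mosaic m z0 \<and>
     (\<forall>x. z0 \<in> m x x \<and> x \<in> m x x) \<and>
     (\<forall>x. set_mop m (m x x) (m x x) = m x x) \<and>
     (\<forall>x y. set_mop m {x} (m x y) \<inter> set_mop m (m x y) {y} \<subseteq> m x y) \<and>
     (\<forall>x y. \<exists>!z. z \<in> m x y \<and> x \<in> m z z \<and> y \<in> m z z)"

definition mosaic_le :: "('a \<Rightarrow> 'a \<Rightarrow> 'a set) \<Rightarrow> 'a rel" where
  "mosaic_le m = {(y, x). y \<in> m x x}"

end

theory Submission
  imports Defs
begin

theorem mainTheorem10:
  fixes m :: "'a \<Rightarrow> 'a \<Rightarrow> 'a set" and z0 :: 'a
  assumes "L_mosaic m z0"
  shows "partial_order_on UNIV (mosaic_le m) \<and> (\<forall>x. (z0, x) \<in> mosaic_le m)"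
proof -
  have L1: "\<And>x. z0 \<in> m x x \<and> x \<in> m x x" using assms unfolding L_mosaic_def by blast
  have L2: "\<And>x. set_mop m (m x x) (m x x) = m x x" using assms unfolding L_mosaic_def by blast
  have L4: "\<And>x y. \<exists>!z. z \<in> m x y \<and> x \<in> m z z \<and> y \<in> m z z"
    using assms unfolding L_mosaic_def by blast
  have refl: "refl_on UNIV (mosaic_le m)"
    unfolding refl_on_def mosaic_le_def using L1 by auto
  have trans: "trans (mosaic_le m)"
  proof (rule transI)
    fix a b c assume ab: "(a, b) \<in> mosaic_le m" and bc: "(b, c) \<in> mosaic_le m"
    hence "a \<in> m b b" "b \<in> m c c" by (auto simp: mosaic_le_def)
    hence "a \<in> set_mop m (m c c) (m c c)" unfolding set_mop_def by blast
    thus "(a, c) \<in> mosaic_le m" using L2[of c] by (simp add: mosaic_le_def)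
  qed
  have anti: "antisym (mosaic_le m)"
  proof (rule antisymI)
    fix x y assume "(x, y) \<in> mosaic_le m" "(y, x) \<in> mosaic_le m"
    hence a: "x \<in> m y y" "y \<in> m x x" by (auto simp: mosaic_le_def)
    from L4[of x x] obtain z where "\<forall>w. w \<in> m x x \<and> x \<in> m w w \<and> x \<in> m w w \<longrightarrow> w = z"
      by blast
    hence "x = z" "y = z" using a L1[of x] by auto
    thus "x = y" by simp
  qed
  show ?thesis
    unfolding partial_order_on_def preorder_on_def
    using refl trans anti L1 by (auto simp: mosaic_le_def)
qed

end
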